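(* Let $X$ be a real Hilbert space, $I=\{1,\dots,m\}$, and $(T_i)_{i\in I}$ nonexpansive operators $X\to X$ with $Z_i=\operatorname{Fix}T_i$ and $Z=\bigcap_iZ_i$. Suppose there is $z\in Z$ such that each $T_i$ is projective with respect to $z$, and that $(Z_i)_{i\in I}$ is boundedly regular. Then $T=T_m\cdots T_2T_1$ is projective with respect to $z$, and for every $x_0\in X$ the sequence $(T^nx_0)_{n\in\mathbb N}$ converges strongly to some point of $Z$.
   Context: A nonexpansive $T$ with $z\in\operatorname{Fix}T$ is projective with respect to $z$ if for every bounded sequence $(x_n)$ with $\|x_n-z\|-\|Tx_n-z\|\to0$ we have $d_{\operatorname{Fix}T}(x_n)\to0$. A finite family $(C_i)$ of closed convex sets with $C=\bigcap_iC_i\ne\varnothing$ is boundedly regular if for every bounded sequence $(x_n)$, $\max_id_{C_i}(x_n)\to0$ implies $d_C(x_n)\to0$. *)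

theory Defs
  imports "HOL-Analysis.Analysis"
begin

definition nonexpansive :: "('a::real_normed_vector \<Rightarrow> 'a) \<Rightarrow> bool" where
  "nonexpansive T \<longleftrightarrow> (\<forall>x y. norm (T x - T y) \<le> norm (x - y))"

definition Fix :: "('a \<Rightarrow> 'a) \<Rightarrow> 'a set" where
  "Fix T = {x. T x = x}"

definition projective_wrt :: "('a::real_normed_vector \<Rightarrow> 'a) \<Rightarrow> 'a \<Rightarrow> bool" where
  "projective_wrt T z \<longleftrightarrow> nonexpansive T \<and> z \<in> Fix T \<and>
     (\<forall>x::nat \<Rightarrow> 'a. bounded (range x) \<longrightarrow>
        ((\<lambda>n. norm (x n - z) - norm (T (x n) - z)) \<longlonglongrightarrow> 0) \<longrightarrow>
        ((\<lambda>n. infdist (x n) (Fix T)) \<longlonglongrightarrow> 0))"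

definition boundedly_regular :: "'i set \<Rightarrow> ('i \<Rightarrow> 'a::real_normed_vector set) \<Rightarrow> bool" where
  "boundedly_regular I C \<longleftrightarrow> finite I \<and> I \<noteq> {} \<and>
     (\<forall>i\<in>I. closed (C i) \<and> convex (C i)) \<and> (\<Inter>i\<in>I. C i) \<noteq> {} \<and>
     (\<forall>x::nat \<Rightarrow> 'a. bounded (range x) \<longrightarrow>
        ((\<lambda>n. Max ((\<lambda>i. infdist (x n) (C i)) ` I)) \<longlonglongrightarrow> 0) \<longrightarrow>
        ((\<lambda>n. infdist (x n) (\<Inter>i\<in>I. C i)) \<longlonglongrightarrow> 0))"

fun comp_ops :: "(nat \<Rightarrow> 'a \<Rightarrow> 'a) \<Rightarrow> nat \<Rightarrow> 'a \<Rightarrow> 'a" where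
  "comp_ops T 0 = id"
| "comp_ops T (Suc k) = T (Suc k) \<circ> comp_ops T k"

end

theory Submission
  imports Defs
begin

lemma infdist_geI:
  assumes "A \<noteq> {}" "\<And>a. a \<in> A \<Longrightarrow> c \<le> dist x a"
  shows "c \<le> infdist x A"
  using assms by (simp add: infdist_notempty cINF_greatest)

lemma ne_step_bound:
  assumes ne: "nonexpansive S" and F: "Fix S \<noteq> {}"
  shows "norm (S y - y) \<le> 2 * infdist y (Fix S)"
proof -
  have "norm (S y - y) / 2 \<le> infdist y (Fix S)"
  proof (rule infdist_geI[OF F])
    fix q assume q: "q \<in> Fix S"
    hence Sq: "S q = q" by (simp add: Fix_def)
    have "norm (S y - y) \<le> norm (S y - S q) + norm (q - y)"
      using Sq norm_triangle_ineq[of "S y - q" "q - y"] by simp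
    also have "\<dots> \<le> 2 * norm (y - q)"
      using ne unfolding nonexpansive_def by (smt (verit) norm_minus_commute)
    finally show "norm (S y - y) / 2 \<le> dist y q" by (simp add: dist_norm)
  qed
  thus ?thesis by simp
qed

lemma comp_ops_props:
  assumes "k \<le> m" "\<forall>i\<in>{1..m}. nonexpansive (T i)"
  shows "nonexpansive (comp_ops T k) \<and> (\<Inter>i\<in>{1..m}. Fix (T i)) \<subseteq> Fix (comp_ops T k)"
  using assms
proof (induction k)
  case 0
  then show ?case by (auto simp: nonexpansive_def Fix_def)
next
  case (Suc k)
  have ne: "nonexpansive (T (Suc k))" using Suc.prems by auto
  from Suc have IH: "nonexpansive (comp_ops T k)"
     "(\<Inter>i\<in>{1..m}. Fix (T i)) \<subseteq> Fix (comp_ops T k)" by auto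
  have "nonexpansive (comp_ops T (Suc k))"
    unfolding nonexpansive_def
  proof (intro allI)
    fix x y
    have "norm (T (Suc k) (comp_ops T k x) - T (Suc k) (comp_ops T k y))
        \<le> norm (comp_ops T k x - comp_ops T k y)" using ne by (simp add: nonexpansive_def)
    also have "\<dots> \<le> norm (x - y)" using IH(1) by (simp add: nonexpansive_def)
    finally show "norm (comp_ops T (Suc k) x - comp_ops T (Suc k) y) \<le> norm (x - y)" by simp
  qed
  moreover have "(\<Inter>i\<in>{1..m}. Fix (T i)) \<subseteq> Fix (comp_ops T (Suc k))"
  proof
    fix q assume q: "q \<in> (\<Inter>i\<in>{1..m}. Fix (T i))"
    hence "q \<in> Fix (T (Suc k))" using Suc.prems by auto
    moreover have "comp_ops T k q = q" using IH(2) q by (auto simp: Fix_def)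
    ultimately show "q \<in> Fix (comp_ops T (Suc k))" by (simp add: Fix_def)
  qed
  ultimately show ?case by blast
qed

lemma comp_ops_dist:
  assumes "k \<le> m" "\<forall>i\<in>{1..m}. nonexpansive (T i)" "z \<in> (\<Inter>i\<in>{1..m}. Fix (T i))"
  shows "norm (comp_ops T k x - z) \<le> norm (x - z)"
proof -
  from comp_ops_props[OF assms(1,2)] assms(3)
  have "nonexpansive (comp_ops T k)" "comp_ops T k z = z" by (auto simp: Fix_def)
  thus ?thesis by (metis nonexpansive_def)
qed

lemma chain_lemma:
  assumes "k \<le> m" "\<forall>i\<in>{1..m}. nonexpansive (T i)" "z \<in> (\<Inter>i\<in>{1..m}. Fix (T i))"
    and proj: "\<forall>i\<in>{1..m}. projective_wrt (T i) z"
    and bx: "bounded (range x)"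
    and lim: "(\<lambda>n. norm (x n - z) - norm (comp_ops T k (x n) - z)) \<longlonglongrightarrow> 0"
  shows "(\<forall>i\<in>{1..k}. (\<lambda>n. infdist (x n) (Fix (T i))) \<longlonglongrightarrow> 0) \<and>
         (\<lambda>n. norm (comp_ops T k (x n) - x n)) \<longlonglongrightarrow> 0"
  using assms(1) lim
proof (induction k)
  case 0
  then show ?case by simp
next
  case (Suc k)
  define y where "y n = comp_ops T k (x n)" for n
  define S where "S = T (Suc k)"
  have km: "k \<le> m" using Suc.prems by simp
  have pS: "projective_wrt S z" using proj Suc.prems by (auto simp: S_def)
  hence neS: "nonexpansive S" and zS: "z \<in> Fix S" by (auto simp: projective_wrt_def)
  have a_nn: "0 \<le> norm (x n - z) - norm (y n - z)" for n
    using comp_ops_dist[OF km assms(2,3)] by (simp add: y_def)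
  have b_nn: "0 \<le> norm (y n - z) - norm (S (y n) - z)" for n
  proof -
    have "S z = z" using zS by (simp add: Fix_def)
    moreover have "norm (S (y n) - S z) \<le> norm (y n - z)" using neS by (simp add: nonexpansive_def)
    ultimately show ?thesis by simp
  qed
  have sum: "(\<lambda>n. (norm (x n - z) - norm (y n - z)) + (norm (y n - z) - norm (S (y n) - z))) \<longlonglongrightarrow> 0"
    using Suc.prems(2) by (simp add: y_def S_def)
  have la: "(\<lambda>n. norm (x n - z) - norm (y n - z)) \<longlonglongrightarrow> 0"
  proof (rule tendsto_sandwich[OF _ _ tendsto_const sum])
    show "\<forall>\<^sub>F n in sequentially. 0 \<le> norm (x n - z) - norm (y n - z)" using a_nn by simp
    show "\<forall>\<^sub>F n in sequentially. norm (x n - z) - norm (y n - z) \<le> (norm (x n - z) - norm (y n - z)) + (norm (y n - z) - norm (S (y n) - z))"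
      using b_nn by simp
  qed
  have lb: "(\<lambda>n. norm (y n - z) - norm (S (y n) - z)) \<longlonglongrightarrow> 0"
  proof (rule tendsto_sandwich[OF _ _ tendsto_const sum])
    show "\<forall>\<^sub>F n in sequentially. 0 \<le> norm (y n - z) - norm (S (y n) - z)" using b_nn by simp
    show "\<forall>\<^sub>F n in sequentially. norm (y n - z) - norm (S (y n) - z) \<le> (norm (x n - z) - norm (y n - z)) + (norm (y n - z) - norm (S (y n) - z))"
      using a_nn by simp
  qed
  have IH: "(\<forall>i\<in>{1..k}. (\<lambda>n. infdist (x n) (Fix (T i))) \<longlonglongrightarrow> 0) \<and>
         (\<lambda>n. norm (y n - x n)) \<longlonglongrightarrow> 0"
    using Suc.IH[OF km] la by (simp add: y_def)
  obtain e where "\<forall>v\<in>range x. dist z v \<le> e" using bx bounded_any_center[of _ z] by blast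
  hence "norm (x n - z) \<le> e" for n by (auto simp: dist_norm norm_minus_commute)
  hence "norm (y n - z) \<le> e" for n using a_nn[of n] by (smt (verit))
  hence "\<forall>v\<in>range y. dist z v \<le> e" by (auto simp: dist_norm norm_minus_commute)
  hence bdy: "bounded (range y)" using bounded_any_center[of _ z] by blast
  have dy: "(\<lambda>n. infdist (y n) (Fix S)) \<longlonglongrightarrow> 0"
    using pS bdy lb unfolding projective_wrt_def by blast
  have FS: "Fix S \<noteq> {}" using zS by auto
  have st: "(\<lambda>n. norm (S (y n) - y n)) \<longlonglongrightarrow> 0"
  proof (rule tendsto_sandwich[OF _ _ tendsto_const])
    show "\<forall>\<^sub>F n in sequentially. 0 \<le> norm (S (y n) - y n)" by simp
    show "\<forall>\<^sub>F n in sequentially. norm (S (y n) - y n) \<le> 2 * infdist (y n) (Fix S)"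
      using ne_step_bound[OF neS FS] by simp
    show "(\<lambda>n. 2 * infdist (y n) (Fix S)) \<longlonglongrightarrow> 0" using tendsto_mult_right_zero[OF dy] by simp
  qed
  have c2: "(\<lambda>n. norm (comp_ops T (Suc k) (x n) - x n)) \<longlonglongrightarrow> 0"
  proof (rule tendsto_sandwich[OF _ _ tendsto_const])
    show "\<forall>\<^sub>F n in sequentially. 0 \<le> norm (comp_ops T (Suc k) (x n) - x n)" by simp
    show "\<forall>\<^sub>F n in sequentially. norm (comp_ops T (Suc k) (x n) - x n)
        \<le> norm (S (y n) - y n) + norm (y n - x n)"
      using norm_triangle_ineq[of "S (y n) - y n" "y n - x n" for n]
      by (simp add: y_def S_def)
    show "(\<lambda>n. norm (S (y n) - y n) + norm (y n - x n)) \<longlonglongrightarrow> 0"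
      using tendsto_add[OF st conjunct2[OF IH]] by simp
  qed
  have c1: "(\<lambda>n. infdist (x n) (Fix S)) \<longlonglongrightarrow> 0"
  proof (rule tendsto_sandwich[OF _ _ tendsto_const])
    show "\<forall>\<^sub>F n in sequentially. 0 \<le> infdist (x n) (Fix S)" by (simp add: infdist_nonneg)
    show "\<forall>\<^sub>F n in sequentially. infdist (x n) (Fix S) \<le> infdist (y n) (Fix S) + norm (x n - y n)"
      using infdist_triangle[of "x n" "Fix S" "y n" for n] by (simp add: dist_norm)
    have "(\<lambda>n. norm (x n - y n)) \<longlonglongrightarrow> 0" using conjunct2[OF IH] by (simp add: norm_minus_commute)
    thus "(\<lambda>n. infdist (y n) (Fix S) + norm (x n - y n)) \<longlonglongrightarrow> 0"
      using tendsto_add[OF dy] by fastforce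
  qed
  have "\<forall>i\<in>{1..Suc k}. (\<lambda>n. infdist (x n) (Fix (T i))) \<longlonglongrightarrow> 0"
  proof
    fix i assume "i \<in> {1..Suc k}"
    then consider "i \<in> {1..k}" | "i = Suc k" by fastforce
    thus "(\<lambda>n. infdist (x n) (Fix (T i))) \<longlonglongrightarrow> 0"
      by cases (use IH c1 S_def in auto)
  qed
  with c2 show ?case by blast
qed

lemma reg_lemma:
  assumes "m \<ge> 1"
    and ne: "\<forall>i\<in>{1..m}. nonexpansive (T i)"
    and zZ: "z \<in> (\<Inter>i\<in>{1..m}. Fix (T i))"
    and proj: "\<forall>i\<in>{1..m}. projective_wrt (T i) z"
    and reg: "boundedly_regular {1..m} (\<lambda>i. Fix (T i))"
    and bx: "bounded (range x)"
    and lim: "(\<lambda>n. norm (x n - z) - norm (comp_ops T m (x n) - z)) \<longlonglongrightarrow> 0"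
  shows "(\<lambda>n. infdist (x n) (\<Inter>i\<in>{1..m}. Fix (T i))) \<longlonglongrightarrow> 0"
proof -
  have each: "\<forall>i\<in>{1..m}. (\<lambda>n. infdist (x n) (Fix (T i))) \<longlonglongrightarrow> 0"
    using chain_lemma[OF order_refl ne zZ proj bx lim] by blast
  have sl: "(\<lambda>n. \<Sum>i\<in>{1..m}. infdist (x n) (Fix (T i))) \<longlonglongrightarrow> 0"
    using tendsto_sum[of "{1..m}" "\<lambda>i n. infdist (x n) (Fix (T i))" "\<lambda>_. 0"] each by simp
  have ml: "(\<lambda>n. Max ((\<lambda>i. infdist (x n) (Fix (T i))) ` {1..m})) \<longlonglongrightarrow> 0"
  proof (rule tendsto_sandwich[OF _ _ tendsto_const sl])
    have ne1: "{1..m} \<noteq> {}" using assms(1) by simp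
    show "\<forall>\<^sub>F n in sequentially. 0 \<le> Max ((\<lambda>i. infdist (x n) (Fix (T i))) ` {1..m})"
    proof (intro always_eventually allI)
      fix n
      have "infdist (x n) (Fix (T 1)) \<le> Max ((\<lambda>i. infdist (x n) (Fix (T i))) ` {1..m})"
        using assms(1) by (intro Max_ge) auto
      thus "0 \<le> Max ((\<lambda>i. infdist (x n) (Fix (T i))) ` {1..m})"
        using infdist_nonneg order_trans by blast
    qed
    show "\<forall>\<^sub>F n in sequentially. Max ((\<lambda>i. infdist (x n) (Fix (T i))) ` {1..m})
       \<le> (\<Sum>i\<in>{1..m}. infdist (x n) (Fix (T i)))"
    proof (intro always_eventually allI)
      fix n
      show "Max ((\<lambda>i. infdist (x n) (Fix (T i))) ` {1..m})
       \<le> (\<Sum>i\<in>{1..m}. infdist (x n) (Fix (T i)))"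
        using ne1 by (subst Max_le_iff) (auto intro!: member_le_sum infdist_nonneg)
    qed
  qed
  show ?thesis using reg bx ml unfolding boundedly_regular_def by blast
qed

theorem proposition7p8:
  fixes T :: "nat \<Rightarrow> 'a::{real_inner, complete_space} \<Rightarrow> 'a"
    and m :: nat and z :: 'a
  assumes "m \<ge> 1"
    and "\<forall>i\<in>{1..m}. nonexpansive (T i)"
    and "z \<in> (\<Inter>i\<in>{1..m}. Fix (T i))"
    and "\<forall>i\<in>{1..m}. projective_wrt (T i) z"
    and "boundedly_regular {1..m} (\<lambda>i. Fix (T i))"
  shows "projective_wrt (comp_ops T m) z \<and>
         (\<forall>x0. \<exists>p\<in>(\<Inter>i\<in>{1..m}. Fix (T i)).
                 (\<lambda>n. (comp_ops T m ^^ n) x0) \<longlonglongrightarrow> p)"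
proof -
  define Z where "Z = (\<Inter>i\<in>{1..m}. Fix (T i))"
  define S where "S = comp_ops T m"
  have props: "nonexpansive S" "Z \<subseteq> Fix S"
    using comp_ops_props[OF order_refl assms(2)] by (auto simp: S_def Z_def)
  have zZ: "z \<in> Z" using assms(3) by (simp add: Z_def)
  have Zne: "Z \<noteq> {}" using zZ by auto
  have Zcl: "closed Z" using assms(5) unfolding boundedly_regular_def Z_def by (auto intro: closed_INT)
  have fixS: "S q = q" if "q \<in> Z" for q using props(2) that by (auto simp: Fix_def)
  have RL: "(\<lambda>n. infdist (x n) Z) \<longlonglongrightarrow> 0"
    if "bounded (range x)" "(\<lambda>n. norm (x n - z) - norm (S (x n) - z)) \<longlonglongrightarrow> 0" for x
    using reg_lemma[OF assms that[unfolded S_def]] by (simp add: Z_def)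
  have P1: "projective_wrt S z"
    unfolding projective_wrt_def
  proof (intro conjI allI impI)
    show "nonexpansive S" by (rule props(1))
    show "z \<in> Fix S" using props(2) zZ by auto
    fix x :: "nat \<Rightarrow> 'a"
    assume h: "bounded (range x)" "(\<lambda>n. norm (x n - z) - norm (S (x n) - z)) \<longlonglongrightarrow> 0"
    show "(\<lambda>n. infdist (x n) (Fix S)) \<longlonglongrightarrow> 0"
    proof (rule tendsto_sandwich[OF _ _ tendsto_const RL[OF h]])
      show "\<forall>\<^sub>F n in sequentially. 0 \<le> infdist (x n) (Fix S)" by (simp add: infdist_nonneg)
      show "\<forall>\<^sub>F n in sequentially. infdist (x n) (Fix S) \<le> infdist (x n) Z"
        using infdist_mono[OF props(2) Zne] by simp
    qed
  qed
  have P2: "\<exists>p\<in>Z. (\<lambda>n. (S ^^ n) x0) \<longlonglongrightarrow> p" for x0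
  proof -
    define x where "x n = (S ^^ n) x0" for n
    have xs: "x (Suc n) = S (x n)" for n by (simp add: x_def)
    have step1: "norm (x (Suc n) - q) \<le> norm (x n - q)" if "q \<in> Z" for n q
    proof -
      have "norm (S (x n) - S q) \<le> norm (x n - q)" using props(1) by (simp add: nonexpansive_def)
      thus ?thesis using fixS[OF that] xs by simp
    qed
    have fej: "norm (x k - q) \<le> norm (x j - q)" if "q \<in> Z" "j \<le> k" for j k q
      using that(2)
    proof (induction k rule: dec_induct)
      case base then show ?case by simp
    next
      case (step k) then show ?case using step1[OF that(1), of k] by linarith
    qed
    have dec: "decseq (\<lambda>n. norm (x n - z))"
      using fej[OF zZ] by (simp add: decseq_def)
    obtain L where L: "(\<lambda>n. norm (x n - z)) \<longlonglongrightarrow> L"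
      using decseq_convergent[OF dec, of 0] by auto
    have "(\<lambda>n. norm (x n - z) - norm (x (Suc n) - z)) \<longlonglongrightarrow> L - L"
      using tendsto_diff[OF L LIMSEQ_Suc[OF L]] .
    hence lim: "(\<lambda>n. norm (x n - z) - norm (S (x n) - z)) \<longlonglongrightarrow> 0" by (simp add: xs)
    have "\<forall>v\<in>range x. dist z v \<le> norm (x 0 - z)"
      using fej[OF zZ] by (auto simp: dist_norm norm_minus_commute)
    hence bx: "bounded (range x)" using bounded_any_center[of _ z] by blast
    have dZ: "(\<lambda>n. infdist (x n) Z) \<longlonglongrightarrow> 0" using RL[OF bx lim] .
    have "Cauchy x"
    proof (rule metric_CauchyI)
      fix e :: real assume e: "e > 0"
      from dZ e obtain M where M: "\<forall>n\<ge>M. norm (infdist (x n) Z - 0) < e / 2"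
        unfolding LIMSEQ_def dist_norm by (meson half_gt_zero)
      hence M': "infdist (x M) Z < e / 2" by auto
      show "\<exists>M. \<forall>m\<ge>M. \<forall>n\<ge>M. dist (x m) (x n) < e"
      proof (intro exI allI impI)
        fix a b assume ab: "M \<le> a" "M \<le> b"
        have "dist (x a) (x b) / 2 \<le> infdist (x M) Z"
        proof (rule infdist_geI[OF Zne])
          fix q assume q: "q \<in> Z"
          have "dist (x a) (x b) \<le> dist (x a) q + dist (x b) q" by (rule dist_triangle2)
          also have "\<dots> \<le> 2 * dist (x M) q"
            using fej[OF q ab(1)] fej[OF q ab(2)] by (simp add: dist_norm)
          finally show "dist (x a) (x b) / 2 \<le> dist (x M) q" by simp
        qed
        thus "dist (x a) (x b) < e" using M' by simp
      qed
    qed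
    then obtain p where p: "x \<longlonglongrightarrow> p" using Cauchy_convergent_iff convergent_def by blast
    have "(\<lambda>n. infdist (x n) Z) \<longlonglongrightarrow> infdist p Z" using tendsto_infdist[OF p] .
    hence "infdist p Z = 0" using dZ LIMSEQ_unique by blast
    hence "p \<in> Z" using in_closed_iff_infdist_zero[OF Zcl Zne] by blast
    moreover have "x = (\<lambda>n. (S ^^ n) x0)" by (rule ext) (simp add: x_def)
    ultimately show ?thesis using p by blast
  qed
  show ?thesis using P1 P2 by (simp add: S_def Z_def)
qed

end
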